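(* Let $k\ge2$ and let $g_1,g_2$ be densities on $(0,1)$ of the form $g_i(x)=\sum_{j=0}^{k-1}\beta_{i,j}\psi_{j+1}(x,1)+\beta_{i,k}\int_{(0,1)}\psi_k(x,\theta)\,dQ_i(\theta)$, $i=1,2$, with $(\beta_{i,0},\ldots,\beta_{i,k})\in\Delta_{k+1}$ and $Q_i$ probability measures on $(0,1)$. Set $\alpha_i=\beta_{i,0}$. Then $$|\alpha_1-\alpha_2|\le\sqrt{6\,\|g_1-g_2\|_1}.$$
   Context: $\psi_k(x,\theta)=\frac{k}{\theta}(1-\frac{x}{\theta})_+^{k-1}$ for $x,\theta>0$; in particular $\psi_1(\cdot,1)\equiv1$ on $(0,1)$. $\Delta_J=\{(w_1,\ldots,w_J)\in[0,1]^J:\sum_iw_i=1\}$. $\|\cdot\|_1$ is the $\mathbb{L}_1(0,1)$ norm. *)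

theory Defs
  imports "HOL-Probability.Probability"
begin

definition psi :: "nat \<Rightarrow> real \<Rightarrow> real \<Rightarrow> real" where
  "psi k x \<theta> = real k / \<theta> * (max 0 (1 - x / \<theta>)) ^ (k - 1)"

text \<open>Delta_J for J = k+1, coordinates indexed 0..k\<close>
definition simplexDelta :: "nat \<Rightarrow> (nat \<Rightarrow> real) \<Rightarrow> bool" where
  "simplexDelta k w \<longleftrightarrow> (\<forall>j\<le>k. w j \<in> {0..1}) \<and> (\<Sum>j\<le>k. w j) = 1"

definition prob_on_unit :: "real measure \<Rightarrow> bool" where
  "prob_on_unit Q \<longleftrightarrow> prob_space Q \<and> sets Q = sets borel \<and> measure Q {0<..<1} = 1"

definition mixdens :: "nat \<Rightarrow> (nat \<Rightarrow> real) \<Rightarrow> real measure \<Rightarrow> real \<Rightarrow> real" where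
  "mixdens k \<beta> Q x = (\<Sum>j<k. \<beta> j * psi (j+1) x 1) + \<beta> k * (\<integral>\<theta>. psi k x \<theta> \<partial>Q)"

end

theory Submission
  imports Defs
begin

lemma psi_meas: "(\<lambda>p. psi k (fst p) (snd p)) \<in> borel_measurable (borel \<Otimes>\<^sub>M borel)"
  unfolding psi_def by measurable

lemma psi_meas2: assumes "sets Q = sets borel"
  shows "(\<lambda>p. psi k (fst p) (snd p)) \<in> borel_measurable (lborel \<Otimes>\<^sub>M Q)"
proof -
  have "sets (lborel \<Otimes>\<^sub>M Q) = sets (borel \<Otimes>\<^sub>M (borel::real measure))"
    by (rule sets_pair_measure_cong) (auto simp: assms)
  then show ?thesis using psi_meas measurable_cong_sets by blast
qed

lemma pow_half: "real (n+2) * (1/2)^n \<le> 2"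
proof (induction n)
  case 0 then show ?case by simp
next
  case (Suc n)
  have "real (Suc n + 2) * (1/2)^(Suc n) = (real (n+3)/2) * (1/2)^n" by simp
  also have "\<dots> \<le> real (n+2) * (1/2)^n" by (intro mult_right_mono) auto
  finally show ?case using Suc by linarith
qed

lemma pow_bound: assumes "0 \<le> s" "s \<le> 1/2" "j \<ge> 1"
  shows "real (j+1) * s^j \<le> 2 * s"
proof -
  obtain n where n: "j = n+1" using assms(3) by (metis add.commute le_add_diff_inverse)
  have "real (j+1) * s^j = (real (n+2) * s^n) * s" by (simp add: n)
  also have "\<dots> \<le> (real (n+2) * (1/2)^n) * s"
    by (intro mult_right_mono mult_left_mono power_mono) (use assms in auto)
  also have "\<dots> \<le> 2 * s" using pow_half[of n] assms by (intro mult_right_mono) auto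
  finally show ?thesis .
qed

lemma psi_nonneg: "\<theta> > 0 \<Longrightarrow> psi k x \<theta> \<ge> 0"
  unfolding psi_def by auto

lemma psi_poly: assumes "1 \<le> j" "1/2 \<le> x" "x < 1"
  shows "psi (j+1) x 1 \<le> 2 * (1 - x)"
proof -
  have "psi (j+1) x 1 = real (j+1) * (1-x)^j" using assms unfolding psi_def by simp
  also have "\<dots> \<le> 2 * (1-x)" by (rule pow_bound) (use assms in auto)
  finally show ?thesis .
qed

lemma psi_mix: assumes "k \<ge> 2" "1/2 \<le> x" "x < 1" "0 < \<theta>" "\<theta> < 1"
  shows "psi k x \<theta> \<le> 2 * (1 - x)"
proof (cases "\<theta> \<le> x")
  case True
  then have "max 0 (1 - x/\<theta>) = 0" using assms by (auto simp: field_simps)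
  then show ?thesis using assms unfolding psi_def by (simp add: zero_power)
next
  case False
  define s where "s = 1 - x"
  define u where "u = 1 - \<theta>"
  have su: "0 < u" "u < s" "s \<le> 1/2" using assms False by (auto simp: s_def u_def)
  have eq: "max 0 (1 - x/\<theta>) = (s - u) / (1 - u)"
    using False assms by (auto simp: s_def u_def field_simps)
  have "psi k x \<theta> = real k * ((s-u)/(1-u))^(k-1) / (1-u)"
    unfolding psi_def eq by (simp add: u_def)
  also have "\<dots> = real k * (s-u)^(k-1) / (1-u)^k"
  proof -
    have "k = (k-1) + 1" using assms by simp
    then have "(1-u)^k = (1-u)^(k-1) * (1-u)" by (metis power_add power_one_right)
    then show ?thesis by (simp add: power_divide)
  qed
  also have "\<dots> \<le> real k * s^(k-1)"
  proof -
    have a1: "u * (1 - 2 * s) \<ge> 0" "s * u^2 \<ge> 0" using su by auto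
    have a: "s - u \<le> s * (1-u)^2" using a1 by (simp add: power2_eq_square algebra_simps)
    have "(s-u)^(k-1) \<le> (s * (1-u)^2)^(k-1)" by (rule power_mono) (use a su in auto)
    also have "\<dots> = s^(k-1) * (1-u)^(2*(k-1))" by (simp add: power_mult_distrib power_mult)
    also have "\<dots> \<le> s^(k-1) * (1-u)^k"
      by (intro mult_left_mono power_decreasing) (use su assms in auto)
    finally have "(s-u)^(k-1) \<le> s^(k-1) * (1-u)^k" .
    moreover have "(1-u)^k > 0" using su by simp
    ultimately show ?thesis by (simp add: divide_le_eq mult.assoc mult_left_mono)
  qed
  also have "\<dots> \<le> 2 * s"
    using pow_bound[of s "k-1"] su assms by (simp add: Suc_diff_le of_nat_diff)
  finally show ?thesis by (simp add: s_def)
qed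

lemma AE_unit: assumes "prob_on_unit Q" shows "AE \<theta> in Q. \<theta> \<in> {0<..<1::real}"
  using assms prob_space.AE_prob_1 unfolding prob_on_unit_def by blast

lemma G_nonneg: assumes "prob_on_unit Q" shows "0 \<le> (\<integral>\<theta>. psi k x \<theta> \<partial>Q)"
  by (rule integral_nonneg_AE) (use AE_unit[OF assms] in \<open>auto elim!: eventually_mono intro: psi_nonneg\<close>)

lemma G_upper: assumes "prob_on_unit Q" "k \<ge> 2" "1/2 \<le> x" "x < 1"
  shows "(\<integral>\<theta>. psi k x \<theta> \<partial>Q) \<le> 2 * (1 - x)"
proof (cases "integrable Q (\<lambda>\<theta>. psi k x \<theta>)")
  case True
  have ps: "prob_space Q" using assms(1) unfolding prob_on_unit_def by auto
  then interpret prob_space Q .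
  have "(\<integral>\<theta>. psi k x \<theta> \<partial>Q) \<le> (\<integral>\<theta>. 2 * (1 - x) \<partial>Q)"
  proof (rule integral_mono_AE)
    show "AE \<theta> in Q. psi k x \<theta> \<le> 2 * (1 - x)" using AE_unit[OF assms(1)]
      by (rule eventually_mono) (metis greaterThanLessThan_iff psi_mix assms(2-4))
  qed (use True in auto)
  also have "\<dots> = 2 * (1 - x)" by (simp add: prob_space)
  finally show ?thesis .
next
  case False
  then show ?thesis using assms by (simp add: not_integrable_integral_eq)
qed

lemma ennreal_integral_le: assumes "AE \<theta> in Q. 0 \<le> f \<theta>"
  shows "ennreal (\<integral>\<theta>. f \<theta> \<partial>Q) \<le> (\<integral>\<^sup>+\<theta>. ennreal (f \<theta>) \<partial>Q)"
proof (cases "integrable Q f")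
  case True
  then show ?thesis using nn_integral_eq_integral[OF True assms] by simp
next
  case False
  then show ?thesis by (simp add: not_integrable_integral_eq)
qed

lemma inner_bound: assumes "k \<ge> 2"
  shows "(\<integral>\<^sup>+x. ennreal (indicator {0<..<1} x * psi k x \<theta>) \<partial>lborel) \<le> ennreal (real k)"
proof (cases "\<theta> > 0")
  case False
  have "\<And>x. ennreal (indicator {0<..<1} x * psi k x \<theta>) = 0"
  proof -
    fix x :: real
    have "indicator {0<..<1} x * psi k x \<theta> \<le> 0"
      using False unfolding psi_def by (auto simp: indicator_def intro!: mult_nonpos_nonneg divide_nonneg_nonpos)
    then show "ennreal (indicator {0<..<1} x * psi k x \<theta>) = 0" by (simp add: ennreal_eq_0_iff)
  qed
  then show ?thesis by simp
next
  case True
  have "(\<integral>\<^sup>+x. ennreal (indicator {0<..<1} x * psi k x \<theta>) \<partial>lborel)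
      \<le> (\<integral>\<^sup>+x. ennreal (real k / \<theta>) * indicator {0..\<theta>} x \<partial>lborel)"
  proof (rule nn_integral_mono)
    fix x :: real
    show "ennreal (indicator {0<..<1} x * psi k x \<theta>) \<le> ennreal (real k / \<theta>) * indicator {0..\<theta>} x"
    proof (cases "x \<in> {0<..<1}")
      case False then show ?thesis by simp
    next
      case xin: True
      show ?thesis
      proof (cases "x \<le> \<theta>")
        case True
        have m: "max 0 (1 - x/\<theta>) \<le> 1" "0 \<le> max 0 (1 - x/\<theta>)" using xin True \<open>\<theta>>0\<close> by auto
        have "(max 0 (1 - x/\<theta>))^(k-1) \<le> 1" using m by (simp add: power_le_one)
        then have "real k * (max 0 (1 - x/\<theta>))^(k-1) \<le> real k" by (intro mult_left_le) auto
        then have "psi k x \<theta> \<le> real k / \<theta>" unfolding psi_def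
          using \<open>\<theta>>0\<close> by (simp add: divide_right_mono)
        then show ?thesis using xin True by (simp add: ennreal_leI)
      next
        case False
        then have "max 0 (1 - x/\<theta>) = 0" using \<open>\<theta>>0\<close> by (auto simp: field_simps)
        then have "psi k x \<theta> = 0" unfolding psi_def using assms by (simp add: zero_power)
        then show ?thesis by simp
      qed
    qed
  qed
  also have "\<dots> = ennreal (real k / \<theta>) * ennreal \<theta>"
    using True by (simp add: nn_integral_cmult_indicator)
  also have "\<dots> = ennreal (real k)" using True by (simp add: ennreal_mult[symmetric])
  finally show ?thesis .
qed

lemma G_int: assumes "prob_on_unit Q" "k \<ge> 2"
  shows "set_integrable lborel {0<..<1::real} (\<lambda>x. \<integral>\<theta>. psi k x \<theta> \<partial>Q)"
proof -
  have ps: "prob_space Q" and sQ: "sets Q = sets borel" using assms(1) unfolding prob_on_unit_def by auto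
  interpret Q: prob_space Q by (rule ps)
  interpret P: pair_sigma_finite lborel Q
    by (simp add: pair_sigma_finite_def lborel.sigma_finite_measure_axioms Q.sigma_finite_measure_axioms)
  have pm[measurable]: "(\<lambda>p. psi k (fst p) (snd p)) \<in> borel_measurable (lborel \<Otimes>\<^sub>M Q)"
    by (rule psi_meas2[OF sQ])
  have Gm: "(\<lambda>x. \<integral>\<theta>. psi k x \<theta> \<partial>Q) \<in> borel_measurable lborel"
    by (rule Q.borel_measurable_lebesgue_integral) (use pm in \<open>simp add: split_beta'\<close>)
  have fm: "case_prod (\<lambda>x \<theta>. ennreal (indicator {0<..<1::real} x * psi k x \<theta>)) \<in> borel_measurable (lborel \<Otimes>\<^sub>M Q)"
    unfolding split_beta' by measurable
  show ?thesis
    unfolding set_integrable_def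
  proof (rule integrableI_nonneg)
    show "(\<lambda>x. indicator {0<..<1} x *\<^sub>R (\<integral>\<theta>. psi k x \<theta> \<partial>Q)) \<in> borel_measurable lborel"
      using Gm by measurable
    show "AE x in lborel. 0 \<le> indicator {0<..<1::real} x *\<^sub>R (\<integral>\<theta>. psi k x \<theta> \<partial>Q)"
      using G_nonneg[OF assms(1)] by auto
    have "(\<integral>\<^sup>+x. ennreal (indicator {0<..<1} x *\<^sub>R (\<integral>\<theta>. psi k x \<theta> \<partial>Q)) \<partial>lborel)
        \<le> (\<integral>\<^sup>+x. (\<integral>\<^sup>+\<theta>. ennreal (indicator {0<..<1::real} x * psi k x \<theta>) \<partial>Q) \<partial>lborel)"
    proof (rule nn_integral_mono)
      fix x :: real
      show "ennreal (indicator {0<..<1} x *\<^sub>R (\<integral>\<theta>. psi k x \<theta> \<partial>Q))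
         \<le> (\<integral>\<^sup>+\<theta>. ennreal (indicator {0<..<1::real} x * psi k x \<theta>) \<partial>Q)"
      proof (cases "x \<in> {0<..<1}")
        case True
        have "AE \<theta> in Q. 0 \<le> psi k x \<theta>" using AE_unit[OF assms(1)]
          by (rule eventually_mono) (auto intro: psi_nonneg)
        then show ?thesis using ennreal_integral_le[where Q=Q and f="\<lambda>\<theta>. psi k x \<theta>"] True by simp
      qed simp
    qed
    also have "\<dots> = (\<integral>\<^sup>+\<theta>. (\<integral>\<^sup>+x. ennreal (indicator {0<..<1::real} x * psi k x \<theta>) \<partial>lborel) \<partial>Q)"
      using P.Fubini'[OF fm] by simp
    also have "\<dots> \<le> (\<integral>\<^sup>+\<theta>. ennreal (real k) \<partial>Q)"
      by (rule nn_integral_mono) (rule inner_bound[OF assms(2)])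
    also have "\<dots> < \<infinity>" by (simp add: Q.emeasure_space_1)
    finally show "(\<integral>\<^sup>+x. ennreal (indicator {0<..<1} x *\<^sub>R (\<integral>\<theta>. psi k x \<theta> \<partial>Q)) \<partial>lborel) < \<infinity>" .
  qed
qed

lemma cont_set_int: fixes f :: "real \<Rightarrow> real" assumes "continuous_on {a..b} f" "a \<le> c" "d \<le> b"
  shows "set_integrable lborel {c<..<d::real} f"
proof -
  have "set_integrable lborel {a..b} f"
    unfolding set_integrable_def by (rule borel_integrable_compact) (use assms in auto)
  then show ?thesis by (rule set_integrable_subset) (use assms in auto)
qed

lemma mix_int: assumes "prob_on_unit Q" "k \<ge> 2"
  shows "set_integrable lborel {0<..<1::real} (mixdens k \<beta> Q)"
proof -
  have c: "continuous_on {0..1} (\<lambda>x. \<Sum>j<k. \<beta> j * psi (j+1) x (1::real))"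
    unfolding psi_def by (intro continuous_intros) auto
  have "set_integrable lborel {0<..<1::real} (\<lambda>x. (\<Sum>j<k. \<beta> j * psi (j+1) x 1) + \<beta> k * (\<integral>\<theta>. psi k x \<theta> \<partial>Q))"
    using cont_set_int[OF c] G_int[OF assms] by (intro set_integral_add set_integrable_mult_right) auto
  then show ?thesis unfolding mixdens_def[abs_def] .
qed

lemma sum_split: fixes k :: nat assumes "k \<ge> 1"
  shows "(\<Sum>j\<le>k. \<beta> j) = \<beta> 0 + (\<Sum>j\<in>{1..<k}. \<beta> j) + (\<beta> k :: real)"
  and "(\<Sum>j<k. \<beta> j) = \<beta> 0 + (\<Sum>j\<in>{1..<k}. \<beta> j)"
proof -
  have e1: "{..k} = insert 0 (insert k {1..<k})" using assms by (auto simp: set_eq_iff)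
  show "(\<Sum>j\<le>k. \<beta> j) = \<beta> 0 + (\<Sum>j\<in>{1..<k}. \<beta> j) + (\<beta> k :: real)"
    unfolding e1 using assms by (simp add: sum.insert)
  have e2: "{..<k} = insert 0 {1..<k}" using assms by auto
  show "(\<Sum>j<k. \<beta> j) = \<beta> 0 + (\<Sum>j\<in>{1..<k}. \<beta> j)"
    unfolding e2 by (simp add: sum.insert)
qed

lemma g_lower: assumes "prob_on_unit Q" "k \<ge> 2" "simplexDelta k \<beta>"
  shows "\<beta> 0 \<le> mixdens k \<beta> Q x"
proof -
  have nn: "\<And>j. j \<le> k \<Longrightarrow> 0 \<le> \<beta> j" using assms(3) unfolding simplexDelta_def by auto
  have "0 \<le> (\<Sum>j\<in>{1..<k}. \<beta> j * psi (j+1) x 1)"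
    by (intro sum_nonneg mult_nonneg_nonneg nn psi_nonneg) auto
  moreover have "0 \<le> \<beta> k * (\<integral>\<theta>. psi k x \<theta> \<partial>Q)"
    using nn[of k] G_nonneg[OF assms(1)] by simp
  moreover have "psi 1 x 1 = 1" unfolding psi_def by simp
  ultimately show ?thesis unfolding mixdens_def
    using sum_split(2)[of k "\<lambda>j. \<beta> j * psi (j+1) x 1"] assms(2) by simp
qed

lemma g_upper: assumes "prob_on_unit Q" "k \<ge> 2" "simplexDelta k \<beta>" "1/2 \<le> x" "x < 1"
  shows "mixdens k \<beta> Q x \<le> \<beta> 0 + 2 * (1 - x)"
proof -
  have nn: "\<And>j. j \<le> k \<Longrightarrow> 0 \<le> \<beta> j" using assms(3) unfolding simplexDelta_def by auto
  have s1: "(\<Sum>j\<le>k. \<beta> j) = 1" using assms(3) unfolding simplexDelta_def by auto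
  have "(\<Sum>j\<in>{1..<k}. \<beta> j * psi (j+1) x 1) \<le> (\<Sum>j\<in>{1..<k}. \<beta> j * (2 * (1 - x)))"
    by (intro sum_mono mult_left_mono nn psi_poly) (use assms in auto)
  moreover have "\<beta> k * (\<integral>\<theta>. psi k x \<theta> \<partial>Q) \<le> \<beta> k * (2 * (1 - x))"
    by (intro mult_left_mono nn G_upper) (use assms in auto)
  moreover have "psi 1 x 1 = 1" unfolding psi_def by simp
  moreover have "(\<Sum>j\<in>{1..<k}. \<beta> j * (2 * (1 - x))) + \<beta> k * (2 * (1 - x)) \<le> 2 * (1 - x)"
  proof -
    have "(\<Sum>j\<in>{1..<k}. \<beta> j * (2 * (1 - x))) + \<beta> k * (2 * (1 - x))
        = ((\<Sum>j\<in>{1..<k}. \<beta> j) + \<beta> k) * (2 * (1 - x))"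
      by (simp add: sum_distrib_right distrib_right)
    also have "\<dots> \<le> 1 * (2 * (1 - x))"
      using s1 sum_split(1)[of k \<beta>] nn[of 0] assms by (intro mult_right_mono) auto
    finally show ?thesis by simp
  qed
  ultimately show ?thesis unfolding mixdens_def
    using sum_split(2)[of k "\<lambda>j. \<beta> j * psi (j+1) x 1"] assms(2) by simp
qed

lemma main_dir:
  fixes k :: nat and \<beta>1 \<beta>2 :: "nat \<Rightarrow> real" and Q1 Q2 :: "real measure"
  assumes "k \<ge> 2"
    and "simplexDelta k \<beta>1" and "simplexDelta k \<beta>2"
    and "prob_on_unit Q1" and "prob_on_unit Q2"
    and le: "\<beta>2 0 \<le> \<beta>1 0"
  shows "(\<beta>1 0 - \<beta>2 0)^2 \<le>
    4 * (LINT x:{0<..<1::real}|lborel. \<bar>mixdens k \<beta>1 Q1 x - mixdens k \<beta>2 Q2 x\<bar>)"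
proof -
  define \<delta> where "\<delta> = \<beta>1 0 - \<beta>2 0"
  define t where "t = \<delta> / 2"
  define d where "d = (\<lambda>x. mixdens k \<beta>1 Q1 x - mixdens k \<beta>2 Q2 x)"
  have b1: "\<beta>1 0 \<le> 1" using assms(2) unfolding simplexDelta_def by auto
  have b2: "0 \<le> \<beta>2 0" using assms(3) unfolding simplexDelta_def by auto
  have t: "0 \<le> t" "t \<le> 1/2" using le b1 b2 by (auto simp: t_def \<delta>_def)
  have dint: "set_integrable lborel {0<..<1::real} (\<lambda>x. \<bar>d x\<bar>)"
    unfolding d_def
    by (intro set_integrable_abs set_integral_diff mix_int) (use assms in auto)
  have cont: "continuous_on {1-t..1} (\<lambda>x. \<delta> - 2 * (1 - x))" by (intro continuous_intros)
  have lint: "set_integrable lborel {1-t<..<1::real} (\<lambda>x. \<delta> - 2 * (1 - x))"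
    by (rule cont_set_int[OF cont]) auto
  have "(LINT x:{1-t<..<1}|lborel. \<delta> - 2 * (1 - x)) \<le> (LINT x:{0<..<1::real}|lborel. \<bar>d x\<bar>)"
    unfolding set_lebesgue_integral_def
  proof (rule integral_mono)
    show "integrable lborel (\<lambda>x. indicator {1-t<..<1::real} x *\<^sub>R (\<delta> - 2 * (1 - x)))"
      using lint unfolding set_integrable_def .
    show "integrable lborel (\<lambda>x. indicator {0<..<1::real} x *\<^sub>R \<bar>d x\<bar>)"
      using dint unfolding set_integrable_def .
    fix x :: real
    show "indicator {1-t<..<1} x *\<^sub>R (\<delta> - 2 * (1 - x)) \<le> indicator {0<..<1} x *\<^sub>R \<bar>d x\<bar>"
    proof (cases "x \<in> {1-t<..<1}")
      case True
      then have x: "1/2 \<le> x" "x < 1" "x \<in> {0<..<1}" using t by auto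
      have "\<beta>1 0 \<le> mixdens k \<beta>1 Q1 x" by (rule g_lower) (use assms in auto)
      moreover have "mixdens k \<beta>2 Q2 x \<le> \<beta>2 0 + 2 * (1 - x)" by (rule g_upper) (use assms x in auto)
      ultimately have "\<delta> - 2 * (1 - x) \<le> \<bar>d x\<bar>" unfolding d_def \<delta>_def by linarith
      then show ?thesis using True x by simp
    next
      case False
      then show ?thesis by (simp add: indicator_def)
    qed
  qed
  moreover have "(LINT x:{1-t<..<1}|lborel. \<delta> - 2 * (1 - x)) = \<delta>^2 / 4"
  proof -
    have "(LINT x:{1-t<..<1}|lborel. \<delta> - 2 * (1 - x)) = (LBINT x=ereal (1-t)..ereal 1. \<delta> - 2 * (1 - x))"
      using t by (subst interval_integral_Ioo) auto
    also have "\<dots> = (\<delta> * 1 - 2 * 1 + 1^2) - (\<delta> * (1-t) - 2 * (1-t) + (1-t)^2)"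
    proof (rule interval_integral_FTC_finite)
      show "continuous_on {min (1-t) 1..max (1-t) 1} (\<lambda>x. \<delta> - 2 * (1 - x))" by (intro continuous_intros)
      fix x :: real
      show "((\<lambda>x. \<delta> * x - 2 * x + x^2) has_vector_derivative (\<delta> - 2 * (1 - x))) (at x within {min (1-t) 1..max (1-t) 1})"
        unfolding has_real_derivative_iff_has_vector_derivative[symmetric]
        by (auto intro!: derivative_eq_intros simp: algebra_simps)
    qed
    also have "\<dots> = \<delta>^2/4" by (simp add: t_def power2_eq_square algebra_simps)
    finally show ?thesis .
  qed
  ultimately show ?thesis unfolding d_def \<delta>_def by simp
qed

theorem mainTheorem9:
  fixes k :: nat and \<beta>1 \<beta>2 :: "nat \<Rightarrow> real" and Q1 Q2 :: "real measure"
  assumes "k \<ge> 2"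
    and "simplexDelta k \<beta>1" and "simplexDelta k \<beta>2"
    and "prob_on_unit Q1" and "prob_on_unit Q2"
  shows "\<bar>\<beta>1 0 - \<beta>2 0\<bar> \<le>
    sqrt (6 * (LINT x:{0<..<1::real}|lborel. \<bar>mixdens k \<beta>1 Q1 x - mixdens k \<beta>2 Q2 x\<bar>))"
proof -
  define L where "L = (LINT x:{0<..<1::real}|lborel. \<bar>mixdens k \<beta>1 Q1 x - mixdens k \<beta>2 Q2 x\<bar>)"
  have "(\<beta>1 0 - \<beta>2 0)^2 \<le> 4 * L"
  proof (cases "\<beta>2 0 \<le> \<beta>1 0")
    case True
    then show ?thesis using main_dir[OF assms True] unfolding L_def by simp
  next
    case False
    have "(\<beta>2 0 - \<beta>1 0)^2 \<le> 4 * (LINT x:{0<..<1::real}|lborel. \<bar>mixdens k \<beta>2 Q2 x - mixdens k \<beta>1 Q1 x\<bar>)"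
      using False by (intro main_dir) (use assms in auto)
    then show ?thesis unfolding L_def by (simp add: abs_minus_commute power2_commute)
  qed
  moreover have "0 \<le> L" unfolding L_def set_lebesgue_integral_def
    by (intro integral_nonneg_AE) (auto simp: indicator_def)
  ultimately have "\<bar>\<beta>1 0 - \<beta>2 0\<bar>^2 \<le> 6 * L" by simp
  then show ?thesis unfolding L_def by (rule real_le_rsqrt)
qed

end
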